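(* For any two vertex-disjoint graphs $G$ and $H$, $f^-(G+H)=f^-(G)+f^-(H)$ and $f^+(G+H)=f^+(G)+f^+(H)$.
   Context: All graphs are finite, simple, undirected and connected. $N[v]=N(v)\cup\{v\}$ is the closed neighbourhood. A chromatic colouring of $G$ is a proper vertex colouring $c:V(G)\to\{c_1,\dots,c_{\chi(G)}\}$. With respect to $c$, a vertex $v$ yields a rainbow neighbourhood if $N[v]$ contains a vertex of each colour $c_1,\dots,c_{\chi(G)}$; $r_\chi(G)$ is the number of such vertices, and $r^-_\chi(G)$, $r^+_\chi(G)$ are its minimum and maximum over all chromatic colourings of $G$. Fading: for a set $F\subseteq V(G)$ (a fade set), the vertices of $F$ receive a transparent colour $c^\circ$ not among $c_1,\dots,c_{\chi(G)}$; after fading, $v$ yields a rainbow neighbourhood iff for every $i$ some vertex of $N[v]\setminus F$ has colour $c_i$. The fading number $f^-(G)$ is the maximum $|F|$ over chromatic colourings $c$ attaining $r_\chi=r^-_\chi(G)$ and fade sets $F$ such that, after fading $F$, the number of vertices yielding rainbow neighbourhoods is still $r^-_\chi(G)$; $f^+(G)$ is defined analogously with $r^+_\chi(G)$. The join $G_1+G_2$ of vertex-disjoint graphs is $G_1\cup G_2$ together with all edges joining a vertex of $G_1$ to a vertex of $G_2$. *)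

theory Defs
  imports Main
begin

definition is_graph :: "'a set \<Rightarrow> ('a \<Rightarrow> 'a \<Rightarrow> bool) \<Rightarrow> bool" where
  "is_graph V E \<longleftrightarrow> finite V \<and> V \<noteq> {}
     \<and> (\<forall>x y. E x y \<longrightarrow> x \<in> V \<and> y \<in> V)
     \<and> (\<forall>x y. E x y \<longrightarrow> E y x)
     \<and> (\<forall>x. \<not> E x x)
     \<and> (\<forall>x\<in>V. \<forall>y\<in>V. E\<^sup>*\<^sup>* x y)"

definition closed_nbhd :: "'a set \<Rightarrow> ('a \<Rightarrow> 'a \<Rightarrow> bool) \<Rightarrow> 'a \<Rightarrow> 'a set" where
  "closed_nbhd V E v = {u \<in> V. E v u} \<union> {v}"

definition proper_colouring :: "'a set \<Rightarrow> ('a \<Rightarrow> 'a \<Rightarrow> bool) \<Rightarrow> ('a \<Rightarrow> nat) \<Rightarrow> nat \<Rightarrow> bool" where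
  "proper_colouring V E c k \<longleftrightarrow> (\<forall>v\<in>V. c v < k) \<and> (\<forall>x\<in>V. \<forall>y\<in>V. E x y \<longrightarrow> c x \<noteq> c y)"

definition chromatic_number :: "'a set \<Rightarrow> ('a \<Rightarrow> 'a \<Rightarrow> bool) \<Rightarrow> nat" where
  "chromatic_number V E = (LEAST k. \<exists>c. proper_colouring V E c k)"

definition chromatic_colouring :: "'a set \<Rightarrow> ('a \<Rightarrow> 'a \<Rightarrow> bool) \<Rightarrow> ('a \<Rightarrow> nat) \<Rightarrow> bool" where
  "chromatic_colouring V E c \<longleftrightarrow> proper_colouring V E c (chromatic_number V E)"

definition rainbow_faded :: "'a set \<Rightarrow> ('a \<Rightarrow> 'a \<Rightarrow> bool) \<Rightarrow> ('a \<Rightarrow> nat) \<Rightarrow> 'a set \<Rightarrow> 'a \<Rightarrow> bool" where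
  "rainbow_faded V E c F v \<longleftrightarrow>
     (\<forall>i < chromatic_number V E. \<exists>u \<in> closed_nbhd V E v - F. c u = i)"

definition rainbow_count_faded :: "'a set \<Rightarrow> ('a \<Rightarrow> 'a \<Rightarrow> bool) \<Rightarrow> ('a \<Rightarrow> nat) \<Rightarrow> 'a set \<Rightarrow> nat" where
  "rainbow_count_faded V E c F = card {v \<in> V. rainbow_faded V E c F v}"

definition rainbow_count :: "'a set \<Rightarrow> ('a \<Rightarrow> 'a \<Rightarrow> bool) \<Rightarrow> ('a \<Rightarrow> nat) \<Rightarrow> nat" where
  "rainbow_count V E c = rainbow_count_faded V E c {}"

definition r_minus :: "'a set \<Rightarrow> ('a \<Rightarrow> 'a \<Rightarrow> bool) \<Rightarrow> nat" where
  "r_minus V E = Min {rainbow_count V E c | c. chromatic_colouring V E c}"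

definition r_plus :: "'a set \<Rightarrow> ('a \<Rightarrow> 'a \<Rightarrow> bool) \<Rightarrow> nat" where
  "r_plus V E = Max {rainbow_count V E c | c. chromatic_colouring V E c}"

definition fading_minus :: "'a set \<Rightarrow> ('a \<Rightarrow> 'a \<Rightarrow> bool) \<Rightarrow> nat" where
  "fading_minus V E = Max {card F | c F. chromatic_colouring V E c
       \<and> rainbow_count V E c = r_minus V E \<and> F \<subseteq> V
       \<and> rainbow_count_faded V E c F = r_minus V E}"

definition fading_plus :: "'a set \<Rightarrow> ('a \<Rightarrow> 'a \<Rightarrow> bool) \<Rightarrow> nat" where
  "fading_plus V E = Max {card F | c F. chromatic_colouring V E c
       \<and> rainbow_count V E c = r_plus V E \<and> F \<subseteq> V
       \<and> rainbow_count_faded V E c F = r_plus V E}"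

definition join_edges :: "'a set \<Rightarrow> ('a \<Rightarrow> 'a \<Rightarrow> bool) \<Rightarrow> 'a set \<Rightarrow> ('a \<Rightarrow> 'a \<Rightarrow> bool) \<Rightarrow> 'a \<Rightarrow> 'a \<Rightarrow> bool" where
  "join_edges V1 E1 V2 E2 x y \<longleftrightarrow> E1 x y \<or> E2 x y
     \<or> (x \<in> V1 \<and> y \<in> V2) \<or> (x \<in> V2 \<and> y \<in> V1)"

end

theory Submission
  imports Defs
begin


definition rk :: "nat set \<Rightarrow> nat \<Rightarrow> nat" where "rk S y = card {z\<in>S. z < y}"

lemma rk_less: assumes "finite S" "x\<in>S" "y\<in>S" "x<y" shows "rk S x < rk S y"
  unfolding rk_def using assms by (intro psubset_card_mono) auto

lemma rk_inj: assumes "finite S" shows "inj_on (rk S) S"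
proof (rule inj_onI)
  fix x y assume "x\<in>S" "y\<in>S" "rk S x = rk S y"
  thus "x = y" using rk_less[OF assms, of x y] rk_less[OF assms, of y x]
    by (metis less_irrefl linorder_neqE_nat)
qed

lemma rk_bound: assumes "finite S" "y\<in>S" shows "rk S y < card S"
  unfolding rk_def using assms by (intro psubset_card_mono) auto

lemma chi_le_card: assumes "finite V" "proper_colouring V E c k"
  shows "chromatic_number V E \<le> card (c`V)"
proof -
  have fin: "finite (c`V)" using assms by simp
  have "proper_colouring V E (rk (c`V) \<circ> c) (card (c`V))"
    using assms(2) rk_bound[OF fin] unfolding proper_colouring_def
    by (auto simp: inj_on_eq_iff[OF rk_inj[OF fin]])
  then show ?thesis unfolding chromatic_number_def by (intro Least_le) blast
qed

lemma chrom_exists: assumes "finite V" "\<forall>x. \<not> E x x"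
  shows "\<exists>c. chromatic_colouring V E c"
proof -
  obtain h where h: "bij_betw h V {0..<card V}" using ex_bij_betw_finite_nat[OF assms(1)] by blast
  have "proper_colouring V E h (card V)" using h assms(2) unfolding proper_colouring_def bij_betw_def
    by (auto dest: inj_onD)
  hence "\<exists>k c. proper_colouring V E c k" by blast
  hence "\<exists>c. proper_colouring V E c (chromatic_number V E)" unfolding chromatic_number_def
    by (rule LeastI_ex)
  thus ?thesis unfolding chromatic_colouring_def .
qed

lemma chrom_image: assumes "finite V" "chromatic_colouring V E c"
  shows "c`V = {0..<chromatic_number V E}"
proof -
  have sub: "c`V \<subseteq> {0..<chromatic_number V E}" using assms(2)
    unfolding chromatic_colouring_def proper_colouring_def by auto
  have "chromatic_number V E \<le> card (c`V)" using chi_le_card assms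
    unfolding chromatic_colouring_def by blast
  thus ?thesis using sub by (intro card_seteq) auto
qed

definition RS :: "'a set \<Rightarrow> ('a \<Rightarrow> 'a \<Rightarrow> bool) \<Rightarrow> ('a \<Rightarrow> nat) \<Rightarrow> 'a set \<Rightarrow> 'a set" where
  "RS V E c F = {v\<in>V. c`V \<subseteq> c`(closed_nbhd V E v - F)}"
definition covers :: "'a set \<Rightarrow> ('a \<Rightarrow> nat) \<Rightarrow> 'a set \<Rightarrow> bool" where
  "covers X c F \<longleftrightarrow> c`X \<subseteq> c`(X - F)"

lemma nbhd_sub: "v\<in>V \<Longrightarrow> closed_nbhd V E v \<subseteq> V" unfolding closed_nbhd_def by auto

lemma rcf_RS: assumes "finite V" "chromatic_colouring V E c"
  shows "rainbow_count_faded V E c F = card (RS V E c F)"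
proof -
  have "{v\<in>V. rainbow_faded V E c F v} = RS V E c F"
    unfolding RS_def rainbow_faded_def chrom_image[OF assms] by (auto simp: subset_iff image_iff)
  thus ?thesis unfolding rainbow_count_faded_def by simp
qed

lemma rc_RS: "finite V \<Longrightarrow> chromatic_colouring V E c \<Longrightarrow> rainbow_count V E c = card (RS V E c {})"
  unfolding rainbow_count_def by (rule rcf_RS)

lemma RS_sub: "RS V E c F \<subseteq> V" unfolding RS_def by auto
lemma RS_mono: "RS V E c F \<subseteq> RS V E c {}" unfolding RS_def by (auto intro: image_mono)
lemma RS_Int: "RS V E c F = RS V E c (F \<inter> V)"
  unfolding RS_def
proof (intro Collect_cong conj_cong refl)
  fix v assume "v \<in> V"
  hence "closed_nbhd V E v - F = closed_nbhd V E v - (F \<inter> V)" using nbhd_sub[of v V E] by blast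
  thus "(c`V \<subseteq> c`(closed_nbhd V E v - F)) = (c`V \<subseteq> c`(closed_nbhd V E v - (F \<inter> V)))" by simp
qed
lemma RS_covers: "v \<in> RS V E c F \<Longrightarrow> covers V c F"
proof -
  assume "v \<in> RS V E c F"
  hence "v \<in> V" "c`V \<subseteq> c`(closed_nbhd V E v - F)" unfolding RS_def by auto
  moreover have "c`(closed_nbhd V E v - F) \<subseteq> c`(V - F)" using nbhd_sub[OF \<open>v\<in>V\<close>, of E] by blast
  ultimately show ?thesis unfolding covers_def by blast
qed
lemma covers_empty: "covers X c {}" unfolding covers_def by simp

lemma img_cong: assumes "\<forall>x\<in>X. c x = d x" "Y \<subseteq> X"
  shows "(c`X \<subseteq> c`Y) = (d`X \<subseteq> d`Y)"
proof -
  have 1: "c ` X = d ` X" by (rule image_cong) (use assms in auto)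
  have 2: "c ` Y = d ` Y" by (rule image_cong) (use assms in auto)
  show ?thesis by (simp add: 1 2)
qed

lemma img_inj: assumes "inj_on g (c`X)" "Y \<subseteq> X"
  shows "((g\<circ>c)`X \<subseteq> (g\<circ>c)`Y) = (c`X \<subseteq> c`Y)"
proof
  assume h: "(g\<circ>c)`X \<subseteq> (g\<circ>c)`Y"
  show "c`X \<subseteq> c`Y"
  proof
    fix a assume a: "a \<in> c`X"
    then obtain x where x: "x \<in> X" "a = c x" by blast
    hence "(g\<circ>c) x \<in> (g\<circ>c)`Y" using h by blast
    then obtain y where y: "y \<in> Y" "g (c x) = g (c y)" by auto
    have "c y \<in> c`X" using y(1) assms(2) by blast
    hence "c x = c y" using inj_onD[OF assms(1) y(2)] x(1) by blast
    thus "a \<in> c`Y" using x y by blast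
  qed
next
  assume "c`X \<subseteq> c`Y"
  thus "(g\<circ>c)`X \<subseteq> (g\<circ>c)`Y" by (metis image_comp image_mono)
qed

lemma RS_cong: "\<forall>x\<in>V. c x = d x \<Longrightarrow> RS V E c F = RS V E d F"
  unfolding RS_def
proof (intro Collect_cong conj_cong refl)
  fix v assume "\<forall>x\<in>V. c x = d x" "v \<in> V"
  thus "(c`V \<subseteq> c`(closed_nbhd V E v - F)) = (d`V \<subseteq> d`(closed_nbhd V E v - F))"
    using img_cong nbhd_sub[of v V E] by (metis Diff_subset subset_trans)
qed

lemma RS_inj: "inj_on g (c`V) \<Longrightarrow> RS V E (g\<circ>c) F = RS V E c F"
  unfolding RS_def
proof (intro Collect_cong conj_cong refl)
  fix v assume "inj_on g (c`V)" "v \<in> V"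
  thus "((g\<circ>c)`V \<subseteq> (g\<circ>c)`(closed_nbhd V E v - F)) = (c`V \<subseteq> c`(closed_nbhd V E v - F))"
    using img_inj nbhd_sub[of v V E] by (metis Diff_subset subset_trans)
qed

lemma covers_cong: "\<forall>x\<in>X. c x = d x \<Longrightarrow> covers X c F = covers X d F"
  unfolding covers_def using img_cong by (metis Diff_subset)
lemma covers_inj: "inj_on g (c`X) \<Longrightarrow> covers X (g\<circ>c) F = covers X c F"
  unfolding covers_def using img_inj by (metis Diff_subset)

lemma RS_nonempty: assumes g: "is_graph V E" and cc: "chromatic_colouring V E c"
  shows "RS V E c {} \<noteq> {}"
proof
  assume none: "RS V E c {} = {}"
  define k where "k = chromatic_number V E"
  have fin: "finite V" and ne: "V \<noteq> {}" and sym: "\<And>x y. E x y \<Longrightarrow> E y x"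
    using g unfolding is_graph_def by auto
  have pc: "proper_colouring V E c k" using cc unfolding chromatic_colouring_def k_def .
  obtain v0 where "v0 \<in> V" using ne by blast
  hence k1: "k \<ge> 1" using pc unfolding proper_colouring_def by fastforce
  have miss: "\<exists>j. j \<in> c`V \<and> j \<notin> c`(closed_nbhd V E v)" if "v \<in> V" for v
    using none that unfolding RS_def by auto
  define g' where "g' v = (SOME j. j \<in> c`V \<and> j \<notin> c`(closed_nbhd V E v))" for v
  have gp: "g' v \<in> c`V \<and> g' v \<notin> c`(closed_nbhd V E v)" if "v \<in> V" for v
    unfolding g'_def using someI_ex[OF miss[OF that]] .
  define c' where "c' x = (if c x = k - 1 then g' x else c x)" for x
  have inN: "\<And>x y. y \<in> V \<Longrightarrow> E x y \<Longrightarrow> y \<in> closed_nbhd V E x" unfolding closed_nbhd_def by auto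
  have selfN: "\<And>x. x \<in> closed_nbhd V E x" unfolding closed_nbhd_def by auto
  have "proper_colouring V E c' (k - 1)"
    unfolding proper_colouring_def
  proof (intro conjI ballI impI)
    fix v assume v: "v \<in> V"
    have "c v < k" using pc v unfolding proper_colouring_def by auto
    show "c' v < k - 1"
    proof (cases "c v = k - 1")
      case True
      have "g' v < k" using gp[OF v] pc unfolding proper_colouring_def by auto
      moreover have "g' v \<noteq> c v" using gp[OF v] selfN[of v] by blast
      ultimately show ?thesis using True unfolding c'_def by simp
    next
      case False thus ?thesis using \<open>c v < k\<close> unfolding c'_def by simp
    qed
  next
    fix x y assume xy: "x \<in> V" "y \<in> V" "E x y"
    have d: "c x \<noteq> c y" using pc xy unfolding proper_colouring_def by auto
    have a: "g' x \<noteq> c y" if "c x = k - 1" using gp[OF xy(1)] inN[OF xy(2,3)] by blast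
    have b: "g' y \<noteq> c x" if "c y = k - 1" using gp[OF xy(2)] inN[OF xy(1) sym[OF xy(3)]] by blast
    show "c' x \<noteq> c' y" unfolding c'_def using a b d by auto
  qed
  hence "k \<le> k - 1" unfolding k_def chromatic_number_def by (intro Least_le) blast
  thus False using k1 by simp
qed



definition SS :: "'a set \<Rightarrow> ('a \<Rightarrow> 'a \<Rightarrow> bool) \<Rightarrow> nat \<Rightarrow> nat set" where
  "SS V E r = {card F | c F. chromatic_colouring V E c
       \<and> rainbow_count V E c = r \<and> F \<subseteq> V
       \<and> rainbow_count_faded V E c F = r}"

lemma SS_finite: "finite V \<Longrightarrow> finite (SS V E r)"
  by (rule finite_subset[of _ "{..card V}"]) (auto simp: SS_def intro: card_mono)

lemma CS_finite: "finite V \<Longrightarrow> finite {rainbow_count V E c | c. chromatic_colouring V E c}"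
  by (rule finite_subset[of _ "{..card V}"])
     (auto simp: rc_RS intro!: card_mono RS_sub)

locale two =
  fixes V1 V2 :: "'a set" and E1 E2 :: "'a \<Rightarrow> 'a \<Rightarrow> bool"
  assumes g1: "is_graph V1 E1" and g2: "is_graph V2 E2" and disj: "V1 \<inter> V2 = {}"
begin

abbreviation "VJ \<equiv> V1 \<union> V2"
abbreviation "EJ \<equiv> join_edges V1 E1 V2 E2"

lemma fin1: "finite V1" using g1 unfolding is_graph_def by auto
lemma fin2: "finite V2" using g2 unfolding is_graph_def by auto
lemma finJ: "finite VJ" using fin1 fin2 by simp
lemma e1: "E1 x y \<Longrightarrow> x \<in> V1 \<and> y \<in> V1" using g1 unfolding is_graph_def by auto
lemma e2: "E2 x y \<Longrightarrow> x \<in> V2 \<and> y \<in> V2" using g2 unfolding is_graph_def by auto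
lemma irr1: "\<forall>x. \<not> E1 x x" using g1 unfolding is_graph_def by auto
lemma irr2: "\<forall>x. \<not> E2 x x" using g2 unfolding is_graph_def by auto
lemma irrJ: "\<forall>x. \<not> EJ x x" using irr1 irr2 disj unfolding join_edges_def by auto

lemma nbhd1: "v \<in> V1 \<Longrightarrow> closed_nbhd VJ EJ v = closed_nbhd V1 E1 v \<union> V2"
  using e1 e2 disj unfolding closed_nbhd_def join_edges_def by blast
lemma nbhd2: "v \<in> V2 \<Longrightarrow> closed_nbhd VJ EJ v = closed_nbhd V2 E2 v \<union> V1"
  using e1 e2 disj unfolding closed_nbhd_def join_edges_def by blast

lemma set_split: "A \<inter> B = {} \<Longrightarrow> X \<subseteq> A \<Longrightarrow> Y \<subseteq> B \<Longrightarrow> (A \<union> B \<subseteq> X \<union> Y) = (A \<subseteq> X \<and> B \<subseteq> Y)"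
  by blast

lemma RS_join:
  assumes dj: "c`V1 \<inter> c`V2 = {}"
  shows "RS VJ EJ c F = (if covers V2 c F then RS V1 E1 c F else {})
                      \<union> (if covers V1 c F then RS V2 E2 c F else {})"
proof -
  have k1: "(c`VJ \<subseteq> c`(closed_nbhd VJ EJ v - F)) = (c`V1 \<subseteq> c`(closed_nbhd V1 E1 v - F) \<and> covers V2 c F)"
    if v: "v \<in> V1" for v
  proof -
    have "closed_nbhd VJ EJ v - F = (closed_nbhd V1 E1 v - F) \<union> (V2 - F)" using nbhd1[OF v] by blast
    hence "c`(closed_nbhd VJ EJ v - F) = c`(closed_nbhd V1 E1 v - F) \<union> c`(V2 - F)" by (metis image_Un)
    moreover have "c`(closed_nbhd V1 E1 v - F) \<subseteq> c`V1" using nbhd_sub[OF v, of E1] by blast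
    moreover have "c`(V2 - F) \<subseteq> c`V2" by blast
    ultimately show ?thesis unfolding covers_def image_Un using set_split[OF dj] by simp
  qed
  have k2: "(c`VJ \<subseteq> c`(closed_nbhd VJ EJ v - F)) = (c`V2 \<subseteq> c`(closed_nbhd V2 E2 v - F) \<and> covers V1 c F)"
    if v: "v \<in> V2" for v
  proof -
    have "closed_nbhd VJ EJ v - F = (closed_nbhd V2 E2 v - F) \<union> (V1 - F)" using nbhd2[OF v] by blast
    hence i1: "c`(closed_nbhd VJ EJ v - F) = c`(closed_nbhd V2 E2 v - F) \<union> c`(V1 - F)" by (metis image_Un)
    have s1: "c`(closed_nbhd V2 E2 v - F) \<subseteq> c`V2" using nbhd_sub[OF v, of E2] by blast
    have s2: "c`(V1 - F) \<subseteq> c`V1" by blast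
    have dj2: "c`V2 \<inter> c`V1 = {}" using dj by blast
    have i2: "c`VJ = c`V2 \<union> c`V1" by blast
    show ?thesis unfolding covers_def i1 i2 using set_split[OF dj2 s1 s2] by simp
  qed
  show ?thesis
  proof (rule set_eqI)
    fix v
    show "v \<in> RS VJ EJ c F \<longleftrightarrow> v \<in> (if covers V2 c F then RS V1 E1 c F else {})
                      \<union> (if covers V1 c F then RS V2 E2 c F else {})"
    proof (cases "v \<in> V1")
      case True
      hence "v \<notin> V2" using disj by blast
      thus ?thesis using True k1[OF True] unfolding RS_def by auto
    next
      case False
      show ?thesis
      proof (cases "v \<in> V2")
        case True
        have a: "v \<in> RS VJ EJ c F \<longleftrightarrow> (c`V2 \<subseteq> c`(closed_nbhd V2 E2 v - F) \<and> covers V1 c F)"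
          using k2[OF True] True unfolding RS_def by simp
        have b: "v \<notin> RS V1 E1 c F" using False RS_sub[of V1 E1 c F] by blast
        have d: "v \<in> RS V2 E2 c F \<longleftrightarrow> c`V2 \<subseteq> c`(closed_nbhd V2 E2 v - F)"
          using True unfolding RS_def by simp
        show ?thesis using a b d by auto
      next
        case F2: False
        thus ?thesis using False RS_sub[of VJ EJ c F] RS_sub[of V1 E1 c F] RS_sub[of V2 E2 c F] by auto
      qed
    qed
  qed
qed

abbreviation "\<chi>1 \<equiv> chromatic_number V1 E1"
abbreviation "\<chi>2 \<equiv> chromatic_number V2 E2"
abbreviation "\<chi>J \<equiv> chromatic_number VJ EJ"

lemma chromJ_parts:
  assumes "chromatic_colouring VJ EJ c"
  shows "c`V1 \<inter> c`V2 = {}" "\<chi>1 \<le> card (c`V1)" "\<chi>2 \<le> card (c`V2)"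
    "card (c`V1) + card (c`V2) = \<chi>J"
proof -
  have pc: "proper_colouring VJ EJ c \<chi>J" using assms unfolding chromatic_colouring_def .
  show dj: "c`V1 \<inter> c`V2 = {}"
    using pc unfolding proper_colouring_def join_edges_def by fastforce
  have "proper_colouring V1 E1 c \<chi>J" using pc e1 unfolding proper_colouring_def join_edges_def by auto
  thus "\<chi>1 \<le> card (c`V1)" using chi_le_card fin1 by blast
  have "proper_colouring V2 E2 c \<chi>J" using pc e2 unfolding proper_colouring_def join_edges_def by auto
  thus "\<chi>2 \<le> card (c`V2)" using chi_le_card fin2 by blast
  have "card (c`VJ) = \<chi>J" using chrom_image[OF finJ assms] by simp
  thus "card (c`V1) + card (c`V2) = \<chi>J" using dj fin1 fin2
    by (simp add: image_Un card_Un_disjoint)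
qed

definition comb :: "('a \<Rightarrow> nat) \<Rightarrow> ('a \<Rightarrow> nat) \<Rightarrow> 'a \<Rightarrow> nat" where
  "comb c1 c2 x = (if x \<in> V1 then c1 x else \<chi>1 + c2 x)"

lemma comb_proper:
  assumes "chromatic_colouring V1 E1 c1" "chromatic_colouring V2 E2 c2"
  shows "proper_colouring VJ EJ (comb c1 c2) (\<chi>1 + \<chi>2)"
  using assms disj e1 e2 unfolding chromatic_colouring_def proper_colouring_def comb_def join_edges_def
  by (smt (verit, ccfv_threshold) IntI Un_iff add_left_cancel empty_iff le_add1 less_le_trans not_add_less1 trans_less_add1 add_less_cancel_left)

lemma chiJ: "\<chi>J = \<chi>1 + \<chi>2"
proof (rule antisym)
  obtain c1 where c1: "chromatic_colouring V1 E1 c1" using chrom_exists fin1 irr1 by blast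
  obtain c2 where c2: "chromatic_colouring V2 E2 c2" using chrom_exists fin2 irr2 by blast
  show "\<chi>J \<le> \<chi>1 + \<chi>2" using comb_proper[OF c1 c2] unfolding chromatic_number_def
    by (intro Least_le) blast
  obtain c where c: "chromatic_colouring VJ EJ c" using chrom_exists finJ irrJ by blast
  show "\<chi>1 + \<chi>2 \<le> \<chi>J" using chromJ_parts[OF c] by linarith
qed

definition Phi :: "('a \<Rightarrow> nat) \<Rightarrow> ('a \<Rightarrow> nat) \<Rightarrow> 'a set \<Rightarrow> 'a set" where
  "Phi c1 c2 F = (if covers V2 c2 F then RS V1 E1 c1 F else {})
               \<union> (if covers V1 c1 F then RS V2 E2 c2 F else {})"

lemma comb_ok:
  assumes c1: "chromatic_colouring V1 E1 c1" and c2: "chromatic_colouring V2 E2 c2"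
  shows "chromatic_colouring VJ EJ (comb c1 c2) \<and> (\<forall>F. RS VJ EJ (comb c1 c2) F = Phi c1 c2 F)"
proof -
  let ?c = "comb c1 c2"
  have "chromatic_colouring VJ EJ ?c" using comb_proper[OF c1 c2] chiJ
    unfolding chromatic_colouring_def by simp
  moreover have "RS VJ EJ ?c F = Phi c1 c2 F" for F
  proof -
    have b1: "\<forall>x\<in>V1. ?c x < \<chi>1" using c1 unfolding comb_def chromatic_colouring_def proper_colouring_def by auto
    have b2: "\<forall>x\<in>V2. ?c x \<ge> \<chi>1" using disj unfolding comb_def by auto
    have dj: "?c`V1 \<inter> ?c`V2 = {}" using b1 b2 by fastforce
    have a1: "\<forall>x\<in>V1. ?c x = c1 x" unfolding comb_def by auto
    have a2: "\<forall>x\<in>V2. ?c x = ((+) \<chi>1 \<circ> c2) x" using disj unfolding comb_def by auto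
    have inj: "inj_on ((+) \<chi>1) (c2`V2)" by (auto intro: inj_onI)
    show ?thesis unfolding RS_join[OF dj] Phi_def
      using RS_cong[OF a1] RS_cong[OF a2] covers_cong[OF a1] covers_cong[OF a2]
        RS_inj[OF inj] covers_inj[OF inj] by (simp add: comp_def)
  qed
  ultimately show ?thesis by blast
qed

lemma decomp:
  assumes c: "chromatic_colouring VJ EJ c"
  shows "\<exists>c1 c2. chromatic_colouring V1 E1 c1 \<and> chromatic_colouring V2 E2 c2
           \<and> (\<forall>F. RS VJ EJ c F = Phi c1 c2 F)"
proof -
  note p = chromJ_parts[OF c]
  have ca: "card (c`V1) = \<chi>1" "card (c`V2) = \<chi>2" using p chiJ by linarith+
  have pc: "proper_colouring VJ EJ c \<chi>J" using c unfolding chromatic_colouring_def .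
  have fa: "finite (c`V1)" "finite (c`V2)" using fin1 fin2 by auto
  define c1 where "c1 = rk (c`V1) \<circ> c"
  define c2 where "c2 = rk (c`V2) \<circ> c"
  have "chromatic_colouring V1 E1 c1" unfolding chromatic_colouring_def proper_colouring_def
  proof (intro conjI ballI impI)
    fix v assume "v \<in> V1" thus "c1 v < \<chi>1" unfolding c1_def using rk_bound[OF fa(1)] ca by auto
  next
    fix x y assume xy: "x \<in> V1" "y \<in> V1" "E1 x y"
    hence "c x \<noteq> c y" using pc unfolding proper_colouring_def join_edges_def by auto
    thus "c1 x \<noteq> c1 y" unfolding c1_def using xy inj_on_eq_iff[OF rk_inj[OF fa(1)]] by auto
  qed
  moreover have "chromatic_colouring V2 E2 c2" unfolding chromatic_colouring_def proper_colouring_def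
  proof (intro conjI ballI impI)
    fix v assume "v \<in> V2" thus "c2 v < \<chi>2" unfolding c2_def using rk_bound[OF fa(2)] ca by auto
  next
    fix x y assume xy: "x \<in> V2" "y \<in> V2" "E2 x y"
    hence "c x \<noteq> c y" using pc unfolding proper_colouring_def join_edges_def by auto
    thus "c2 x \<noteq> c2 y" unfolding c2_def using xy inj_on_eq_iff[OF rk_inj[OF fa(2)]] by auto
  qed
  moreover have "RS VJ EJ c F = Phi c1 c2 F" for F
    unfolding RS_join[OF p(1)] Phi_def c1_def c2_def
    using RS_inj[OF rk_inj[OF fa(1)]] RS_inj[OF rk_inj[OF fa(2)]]
      covers_inj[OF rk_inj[OF fa(1)]] covers_inj[OF rk_inj[OF fa(2)]] by simp
  ultimately show ?thesis by blast
qed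

lemma card_Phi0:
  assumes "chromatic_colouring V1 E1 c1" "chromatic_colouring V2 E2 c2"
  shows "card (Phi c1 c2 {}) = rainbow_count V1 E1 c1 + rainbow_count V2 E2 c2"
proof -
  have "Phi c1 c2 {} = RS V1 E1 c1 {} \<union> RS V2 E2 c2 {}" unfolding Phi_def by (simp add: covers_empty)
  moreover have "RS V1 E1 c1 {} \<inter> RS V2 E2 c2 {} = {}" using RS_sub[of V1 E1 c1 "{}"] RS_sub[of V2 E2 c2 "{}"] disj by blast
  moreover have "finite (RS V1 E1 c1 {})" "finite (RS V2 E2 c2 {})"
    by (rule finite_subset[OF RS_sub fin1], rule finite_subset[OF RS_sub fin2])
  ultimately show ?thesis using rc_RS[OF fin1 assms(1)] rc_RS[OF fin2 assms(2)]
    by (simp add: card_Un_disjoint)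
qed

end



lemma rmin_props: assumes "finite V" "\<forall>x. \<not> E x x"
  shows "(\<exists>c. chromatic_colouring V E c \<and> rainbow_count V E c = r_minus V E)
       \<and> (\<forall>c. chromatic_colouring V E c \<longrightarrow> r_minus V E \<le> rainbow_count V E c)"
proof -
  let ?C = "{rainbow_count V E c | c. chromatic_colouring V E c}"
  have f: "finite ?C" using CS_finite[OF assms(1)] .
  obtain c0 where c0: "chromatic_colouring V E c0" using chrom_exists[of V E, OF assms] by blast
  have "rainbow_count V E c0 \<in> ?C" using c0 by blast
  hence ne: "?C \<noteq> {}" by (metis empty_iff)
  have A: "\<exists>c. chromatic_colouring V E c \<and> rainbow_count V E c = Min ?C"
  proof -
    have "Min ?C \<in> ?C" by (rule Min_in[OF f ne])
    then obtain c where "chromatic_colouring V E c" "Min ?C = rainbow_count V E c" by blast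
    thus ?thesis by metis
  qed
  have B: "\<forall>c. chromatic_colouring V E c \<longrightarrow> Min ?C \<le> rainbow_count V E c"
  proof (intro allI impI)
    fix c assume "chromatic_colouring V E c"
    hence "rainbow_count V E c \<in> ?C" by blast
    thus "Min ?C \<le> rainbow_count V E c" by (rule Min_le[OF f])
  qed
  show ?thesis unfolding r_minus_def using A B by (intro conjI)
qed

lemma rmax_props: assumes "finite V" "\<forall>x. \<not> E x x"
  shows "(\<exists>c. chromatic_colouring V E c \<and> rainbow_count V E c = r_plus V E)
       \<and> (\<forall>c. chromatic_colouring V E c \<longrightarrow> rainbow_count V E c \<le> r_plus V E)"
proof -
  let ?C = "{rainbow_count V E c | c. chromatic_colouring V E c}"
  have f: "finite ?C" using CS_finite[OF assms(1)] .
  obtain c0 where c0: "chromatic_colouring V E c0" using chrom_exists[of V E, OF assms] by blast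
  have "rainbow_count V E c0 \<in> ?C" using c0 by blast
  hence ne: "?C \<noteq> {}" by (metis empty_iff)
  have A: "\<exists>c. chromatic_colouring V E c \<and> rainbow_count V E c = Max ?C"
  proof -
    have "Max ?C \<in> ?C" by (rule Max_in[OF f ne])
    then obtain c where "chromatic_colouring V E c" "Max ?C = rainbow_count V E c" by blast
    thus ?thesis by metis
  qed
  have B: "\<forall>c. chromatic_colouring V E c \<longrightarrow> rainbow_count V E c \<le> Max ?C"
  proof (intro allI impI)
    fix c assume "chromatic_colouring V E c"
    hence "rainbow_count V E c \<in> ?C" by blast
    thus "rainbow_count V E c \<le> Max ?C" by (rule Max_ge[OF f])
  qed
  show ?thesis unfolding r_plus_def using A B by (intro conjI)
qed

context two
begin

lemma rcJ:
  assumes "chromatic_colouring VJ EJ c" "chromatic_colouring V1 E1 c1" "chromatic_colouring V2 E2 c2"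
    "\<forall>F. RS VJ EJ c F = Phi c1 c2 F"
  shows "rainbow_count VJ EJ c = rainbow_count V1 E1 c1 + rainbow_count V2 E2 c2"
  using rc_RS[OF finJ assms(1)] card_Phi0[OF assms(2,3)] assms(4) by simp

lemma rJ_minus: "r_minus VJ EJ = r_minus V1 E1 + r_minus V2 E2"
proof (rule antisym)
  obtain c1 where c1: "chromatic_colouring V1 E1 c1" "rainbow_count V1 E1 c1 = r_minus V1 E1"
    using rmin_props[of V1 E1, OF fin1 irr1] by blast
  obtain c2 where c2: "chromatic_colouring V2 E2 c2" "rainbow_count V2 E2 c2 = r_minus V2 E2"
    using rmin_props[of V2 E2, OF fin2 irr2] by blast
  from comb_ok[OF c1(1) c2(1)] have "rainbow_count VJ EJ (comb c1 c2) = r_minus V1 E1 + r_minus V2 E2"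
    using rcJ c1 c2 by auto
  thus "r_minus VJ EJ \<le> r_minus V1 E1 + r_minus V2 E2"
    using rmin_props[of VJ EJ, OF finJ irrJ] comb_ok[OF c1(1) c2(1)] by metis
next
  obtain c where c: "chromatic_colouring VJ EJ c" "rainbow_count VJ EJ c = r_minus VJ EJ"
    using rmin_props[of VJ EJ, OF finJ irrJ] by blast
  then obtain c1 c2 where d: "chromatic_colouring V1 E1 c1" "chromatic_colouring V2 E2 c2"
    "\<forall>F. RS VJ EJ c F = Phi c1 c2 F" using decomp by blast
  have "r_minus VJ EJ = rainbow_count V1 E1 c1 + rainbow_count V2 E2 c2"
    using rcJ[OF c(1) d] c(2) by simp
  thus "r_minus V1 E1 + r_minus V2 E2 \<le> r_minus VJ EJ"
    using rmin_props[of V1 E1, OF fin1 irr1] rmin_props[of V2 E2, OF fin2 irr2] d by (metis add_mono)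
qed

lemma rJ_plus: "r_plus VJ EJ = r_plus V1 E1 + r_plus V2 E2"
proof (rule antisym)
  obtain c1 where c1: "chromatic_colouring V1 E1 c1" "rainbow_count V1 E1 c1 = r_plus V1 E1"
    using rmax_props[of V1 E1, OF fin1 irr1] by blast
  obtain c2 where c2: "chromatic_colouring V2 E2 c2" "rainbow_count V2 E2 c2 = r_plus V2 E2"
    using rmax_props[of V2 E2, OF fin2 irr2] by blast
  from comb_ok[OF c1(1) c2(1)] have "rainbow_count VJ EJ (comb c1 c2) = r_plus V1 E1 + r_plus V2 E2"
    using rcJ c1 c2 by auto
  thus "r_plus V1 E1 + r_plus V2 E2 \<le> r_plus VJ EJ"
    using rmax_props[of VJ EJ, OF finJ irrJ] comb_ok[OF c1(1) c2(1)] by metis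
next
  obtain c where c: "chromatic_colouring VJ EJ c" "rainbow_count VJ EJ c = r_plus VJ EJ"
    using rmax_props[of VJ EJ, OF finJ irrJ] by blast
  then obtain c1 c2 where d: "chromatic_colouring V1 E1 c1" "chromatic_colouring V2 E2 c2"
    "\<forall>F. RS VJ EJ c F = Phi c1 c2 F" using decomp by blast
  have "r_plus VJ EJ = rainbow_count V1 E1 c1 + rainbow_count V2 E2 c2"
    using rcJ[OF c(1) d] c(2) by simp
  thus "r_plus VJ EJ \<le> r_plus V1 E1 + r_plus V2 E2"
    using rmax_props[of V1 E1, OF fin1 irr1] rmax_props[of V2 E2, OF fin2 irr2] d by (metis add_mono)
qed

lemma SS_ne: "chromatic_colouring V E c \<Longrightarrow> rainbow_count V E c = r \<Longrightarrow> 0 \<in> SS V E r"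
  unfolding SS_def rainbow_count_def by force

lemma fad_join:
  assumes r: "r = r1 + r2"
  and iff: "\<And>c1 c2. chromatic_colouring V1 E1 c1 \<Longrightarrow> chromatic_colouring V2 E2 c2 \<Longrightarrow>
      (rainbow_count V1 E1 c1 + rainbow_count V2 E2 c2 = r \<longleftrightarrow>
       rainbow_count V1 E1 c1 = r1 \<and> rainbow_count V2 E2 c2 = r2)"
  and ex1: "\<exists>c. chromatic_colouring V1 E1 c \<and> rainbow_count V1 E1 c = r1"
  and ex2: "\<exists>c. chromatic_colouring V2 E2 c \<and> rainbow_count V2 E2 c = r2"
  shows "Max (SS VJ EJ r) = Max (SS V1 E1 r1) + Max (SS V2 E2 r2)"
proof -
  have ne1: "SS V1 E1 r1 \<noteq> {}" using ex1 SS_ne by blast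
  have ne2: "SS V2 E2 r2 \<noteq> {}" using ex2 SS_ne by blast
  obtain c1 F1 where h1: "chromatic_colouring V1 E1 c1" "rainbow_count V1 E1 c1 = r1" "F1 \<subseteq> V1"
    "rainbow_count_faded V1 E1 c1 F1 = r1" "card F1 = Max (SS V1 E1 r1)"
    using Max_in[OF SS_finite[OF fin1] ne1] unfolding SS_def by auto
  obtain c2 F2 where h2: "chromatic_colouring V2 E2 c2" "rainbow_count V2 E2 c2 = r2" "F2 \<subseteq> V2"
    "rainbow_count_faded V2 E2 c2 F2 = r2" "card F2 = Max (SS V2 E2 r2)"
    using Max_in[OF SS_finite[OF fin2] ne2] unfolding SS_def by auto
  let ?c = "comb c1 c2"
  let ?F = "F1 \<union> F2"
  have cj: "chromatic_colouring VJ EJ ?c" and phi: "\<forall>F. RS VJ EJ ?c F = Phi c1 c2 F"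
    using comb_ok[OF h1(1) h2(1)] by auto
  have finRS1: "finite (RS V1 E1 c1 {})" by (rule finite_subset[OF RS_sub fin1])
  have finRS2: "finite (RS V2 E2 c2 {})" by (rule finite_subset[OF RS_sub fin2])
  have q1: "RS V1 E1 c1 F1 = RS V1 E1 c1 {}"
    using card_subset_eq[OF finRS1 RS_mono] rcf_RS[OF fin1 h1(1)] rc_RS[OF fin1 h1(1)] h1(2,4) by metis
  have q2: "RS V2 E2 c2 F2 = RS V2 E2 c2 {}"
    using card_subset_eq[OF finRS2 RS_mono] rcf_RS[OF fin2 h2(1)] rc_RS[OF fin2 h2(1)] h2(2,4) by metis
  have "?F \<inter> V1 = F1 \<inter> V1" using h2(3) disj by blast
  hence p1: "RS V1 E1 c1 ?F = RS V1 E1 c1 {}" using q1 RS_Int by metis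
  have "?F \<inter> V2 = F2 \<inter> V2" using h1(3) disj by blast
  hence p2: "RS V2 E2 c2 ?F = RS V2 E2 c2 {}" using q2 RS_Int by metis
  have cv1: "covers V1 c1 ?F"
  proof -
    obtain v where "v \<in> RS V1 E1 c1 {}" using RS_nonempty[OF g1 h1(1)] by blast
    hence "v \<in> RS V1 E1 c1 ?F" using p1 by simp
    thus ?thesis by (rule RS_covers)
  qed
  have cv2: "covers V2 c2 ?F"
  proof -
    obtain v where "v \<in> RS V2 E2 c2 {}" using RS_nonempty[OF g2 h2(1)] by blast
    hence "v \<in> RS V2 E2 c2 ?F" using p2 by simp
    thus ?thesis by (rule RS_covers)
  qed
  have phiF: "Phi c1 c2 ?F = Phi c1 c2 {}" unfolding Phi_def using cv1 cv2 p1 p2 by (simp add: covers_empty)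
  have rcj: "rainbow_count VJ EJ ?c = r" using rcJ[OF cj h1(1) h2(1) phi] h1(2) h2(2) r by simp
  have rcfj: "rainbow_count_faded VJ EJ ?c ?F = r"
    using rcf_RS[OF finJ cj] rc_RS[OF finJ cj] phi phiF rcj by simp
  have mem: "card ?F \<in> SS VJ EJ r" unfolding SS_def using cj rcj rcfj h1(3) h2(3) by blast
  have cardF: "card ?F = card F1 + card F2"
    using h1(3) h2(3) disj finite_subset[OF h1(3) fin1] finite_subset[OF h2(3) fin2]
    by (intro card_Un_disjoint) auto
  have ge: "Max (SS V1 E1 r1) + Max (SS V2 E2 r2) \<le> Max (SS VJ EJ r)"
    using Max_ge[OF SS_finite[OF finJ] mem] cardF h1(5) h2(5) by simp
  have neJ: "SS VJ EJ r \<noteq> {}" using mem by blast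
  obtain c F where h: "chromatic_colouring VJ EJ c" "rainbow_count VJ EJ c = r" "F \<subseteq> VJ"
    "rainbow_count_faded VJ EJ c F = r" "card F = Max (SS VJ EJ r)"
    using Max_in[OF SS_finite[OF finJ] neJ] unfolding SS_def by auto
  obtain d1 d2 where d: "chromatic_colouring V1 E1 d1" "chromatic_colouring V2 E2 d2"
    "\<forall>F. RS VJ EJ c F = Phi d1 d2 F" using decomp[OF h(1)] by blast
  have rd: "rainbow_count V1 E1 d1 = r1" "rainbow_count V2 E2 d2 = r2"
    using rcJ[OF h(1) d] h(2) iff[OF d(1,2)] by auto
  have sub: "Phi d1 d2 F \<subseteq> Phi d1 d2 {}" unfolding Phi_def using RS_mono[of V1 E1 d1 F] RS_mono[of V2 E2 d2 F]
    by (simp add: covers_empty) blast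
  have finP: "finite (Phi d1 d2 {})" unfolding Phi_def
    using finite_subset[OF RS_sub fin1, of E1 d1 "{}"] finite_subset[OF RS_sub fin2, of E2 d2 "{}"] by simp
  have cardP: "card (Phi d1 d2 F) = card (Phi d1 d2 {})"
    using rcf_RS[OF finJ h(1)] rc_RS[OF finJ h(1)] d(3) h(2,4) by metis
  have PF: "Phi d1 d2 F = Phi d1 d2 {}" using card_subset_eq[OF finP sub cardP] .
  have s1: "RS V1 E1 d1 {} \<subseteq> RS V1 E1 d1 F"
  proof
    fix x assume x: "x \<in> RS V1 E1 d1 {}"
    hence "x \<in> Phi d1 d2 {}" unfolding Phi_def by (simp add: covers_empty)
    hence "x \<in> Phi d1 d2 F" using PF by simp
    moreover have "x \<notin> RS V2 E2 d2 F" using x RS_sub[of V1 E1 d1 "{}"] RS_sub[of V2 E2 d2 F] disj by blast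
    ultimately show "x \<in> RS V1 E1 d1 F" unfolding Phi_def by (auto split: if_splits)
  qed
  have s2: "RS V2 E2 d2 {} \<subseteq> RS V2 E2 d2 F"
  proof
    fix x assume x: "x \<in> RS V2 E2 d2 {}"
    hence "x \<in> Phi d1 d2 {}" unfolding Phi_def by (simp add: covers_empty)
    hence "x \<in> Phi d1 d2 F" using PF by simp
    moreover have "x \<notin> RS V1 E1 d1 F" using x RS_sub[of V2 E2 d2 "{}"] RS_sub[of V1 E1 d1 F] disj by blast
    ultimately show "x \<in> RS V2 E2 d2 F" unfolding Phi_def by (auto split: if_splits)
  qed
  have e1: "RS V1 E1 d1 (F \<inter> V1) = RS V1 E1 d1 {}" using s1 RS_mono RS_Int by (metis subset_antisym)
  have e2: "RS V2 E2 d2 (F \<inter> V2) = RS V2 E2 d2 {}" using s2 RS_mono RS_Int by (metis subset_antisym)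
  have m1: "card (F \<inter> V1) \<in> SS V1 E1 r1" unfolding SS_def
    using d(1) rd(1) rcf_RS[OF fin1 d(1)] rc_RS[OF fin1 d(1)] e1 by fastforce
  have m2: "card (F \<inter> V2) \<in> SS V2 E2 r2" unfolding SS_def
    using d(2) rd(2) rcf_RS[OF fin2 d(2)] rc_RS[OF fin2 d(2)] e2 by fastforce
  have "card F = card (F \<inter> V1) + card (F \<inter> V2)"
  proof -
    have "F = (F \<inter> V1) \<union> (F \<inter> V2)" using h(3) by blast
    moreover have "card ((F \<inter> V1) \<union> (F \<inter> V2)) = card (F \<inter> V1) + card (F \<inter> V2)"
      using disj fin1 fin2 by (intro card_Un_disjoint) auto
    ultimately show ?thesis by metis
  qed
  hence le: "Max (SS VJ EJ r) \<le> Max (SS V1 E1 r1) + Max (SS V2 E2 r2)"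
    using Max_ge[OF SS_finite[OF fin1] m1] Max_ge[OF SS_finite[OF fin2] m2] h(5) by linarith
  show ?thesis using le ge by simp
qed

end

theorem theorem2p4:
  fixes V1 V2 :: "'a set" and E1 E2 :: "'a \<Rightarrow> 'a \<Rightarrow> bool"
  assumes "is_graph V1 E1" and "is_graph V2 E2" and "V1 \<inter> V2 = {}"
  shows "fading_minus (V1 \<union> V2) (join_edges V1 E1 V2 E2) = fading_minus V1 E1 + fading_minus V2 E2
       \<and> fading_plus (V1 \<union> V2) (join_edges V1 E1 V2 E2) = fading_plus V1 E1 + fading_plus V2 E2"
proof -
  interpret two V1 V2 E1 E2 using assms by unfold_locales
  have fm: "fading_minus V E = Max (SS V E (r_minus V E))" for V :: "'a set" and E
    unfolding fading_minus_def SS_def ..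
  have fp: "fading_plus V E = Max (SS V E (r_plus V E))" for V :: "'a set" and E
    unfolding fading_plus_def SS_def ..
  have A: "fading_minus (V1 \<union> V2) (join_edges V1 E1 V2 E2) = fading_minus V1 E1 + fading_minus V2 E2"
    unfolding fm
  proof (rule fad_join[OF rJ_minus])
    fix c1 c2 assume cc: "chromatic_colouring V1 E1 c1" "chromatic_colouring V2 E2 c2"
    show "(rainbow_count V1 E1 c1 + rainbow_count V2 E2 c2 = r_minus (V1 \<union> V2) (join_edges V1 E1 V2 E2)) =
          (rainbow_count V1 E1 c1 = r_minus V1 E1 \<and> rainbow_count V2 E2 c2 = r_minus V2 E2)"
    proof -
      have "r_minus V1 E1 \<le> rainbow_count V1 E1 c1" "r_minus V2 E2 \<le> rainbow_count V2 E2 c2"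
        using rmin_props[of V1 E1, OF fin1 irr1] rmin_props[of V2 E2, OF fin2 irr2] cc by auto
      thus ?thesis using rJ_minus by arith
    qed
  qed (use rmin_props[of V1 E1, OF fin1 irr1] rmin_props[of V2 E2, OF fin2 irr2] in blast)+
  have B: "fading_plus (V1 \<union> V2) (join_edges V1 E1 V2 E2) = fading_plus V1 E1 + fading_plus V2 E2"
    unfolding fp
  proof (rule fad_join[OF rJ_plus])
    fix c1 c2 assume cc: "chromatic_colouring V1 E1 c1" "chromatic_colouring V2 E2 c2"
    show "(rainbow_count V1 E1 c1 + rainbow_count V2 E2 c2 = r_plus (V1 \<union> V2) (join_edges V1 E1 V2 E2)) =
          (rainbow_count V1 E1 c1 = r_plus V1 E1 \<and> rainbow_count V2 E2 c2 = r_plus V2 E2)"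
    proof -
      have "rainbow_count V1 E1 c1 \<le> r_plus V1 E1" "rainbow_count V2 E2 c2 \<le> r_plus V2 E2"
        using rmax_props[of V1 E1, OF fin1 irr1] rmax_props[of V2 E2, OF fin2 irr2] cc by auto
      thus ?thesis using rJ_plus by arith
    qed
  qed (use rmax_props[of V1 E1, OF fin1 irr1] rmax_props[of V2 E2, OF fin2 irr2] in blast)+
  show ?thesis using A B ..
qed

end
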